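(* For every fixed positive integer $n$ there exists $\varepsilon>0$ such that for every positive integer $N$ there is no partitioning $f$ of the complete directed graph with loops $K_N$ on $N$ vertices (vertex set $V$ with $|V|=N$ and edge set $E=V\times V$) into $n$ partitions such that both (1) $\mathrm{rf}(f,v)\le k(n)-1$ for all $v\in V$, and (2) $\mathrm{ib}(f)\le 1+\varepsilon$.
   Context: Let $G=(V,E)$ be a directed graph and $P$ an $n$-element set (the partitions). A graph partitioning (partitioning into $n$ partitions) is a function $f:E\to P$. Its imbalance is $\mathrm{ib}(f)=\dfrac{\max_{l\in P}|\{e\in E: f(e)=l\}|}{|E|/n}$. For $v\in V$ let $E(v)$ be the set of edges incident to $v$; the replication factor of $v$ is $\mathrm{rf}(f,v)=|f(E(v))|$. A system on $n$ elements is a triple $(\mathcal{F},w,s)$ where $\mathcal{F}=(F_1,\dots,F_m)$ is a collection of subsets of $[n]$, $w\in[0,1]^m$ with $\sum_i w_i=1$, and $s\in[0,1]^{m\times m\times n}$ with $\sum_p s_{ijp}=1$ for all $i,j$. It is intersecting if for all $i,j,p$, $s_{ijp}>0$ implies $p\in F_i\cap F_j$. It is balanced if for all $p\in[n]$, $\sum_{i,j} w_iw_js_{ijp}=1/n$. Its cardinality is the size of the largest set in $\mathcal{F}$. $k(n)$ is the minimum $k$ such that there exists a balanced intersecting system on $n$ elements with cardinality $k$. *)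

theory Defs
  imports Main "HOL-Analysis.Analysis"
begin

definition partitioning :: "('v \<times> 'v) set \<Rightarrow> 'p set \<Rightarrow> ('v \<times> 'v \<Rightarrow> 'p) \<Rightarrow> bool" where
  "partitioning E P f \<longleftrightarrow> (\<forall>e\<in>E. f e \<in> P)"

definition imbalance :: "('v \<times> 'v) set \<Rightarrow> 'p set \<Rightarrow> ('v \<times> 'v \<Rightarrow> 'p) \<Rightarrow> real" where
  "imbalance E P f =
     real (Max ((\<lambda>l. card {e\<in>E. f e = l}) ` P)) / (real (card E) / real (card P))"

definition incident_edges :: "('v \<times> 'v) set \<Rightarrow> 'v \<Rightarrow> ('v \<times> 'v) set" where
  "incident_edges E v = {e\<in>E. fst e = v \<or> snd e = v}"

definition replication_factor :: "('v \<times> 'v) set \<Rightarrow> ('v \<times> 'v \<Rightarrow> 'p) \<Rightarrow> 'v \<Rightarrow> nat" where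
  "replication_factor E f v = card (f ` incident_edges E v)"

text \<open>Systems on n elements. The collection F = (F_1,...,F_m) is indexed by 0..<m,
  the ground set is [n] = {1..n}.\<close>

definition is_system ::
  "nat \<Rightarrow> nat \<Rightarrow> (nat \<Rightarrow> nat set) \<Rightarrow> (nat \<Rightarrow> real) \<Rightarrow> (nat \<Rightarrow> nat \<Rightarrow> nat \<Rightarrow> real) \<Rightarrow> bool" where
  "is_system n m F w s \<longleftrightarrow>
     (\<forall>i<m. F i \<subseteq> {1..n}) \<and>
     (\<forall>i<m. 0 \<le> w i \<and> w i \<le> 1) \<and> (\<Sum>i<m. w i) = 1 \<and>
     (\<forall>i<m. \<forall>j<m. \<forall>p\<in>{1..n}. 0 \<le> s i j p \<and> s i j p \<le> 1) \<and>
     (\<forall>i<m. \<forall>j<m. (\<Sum>p\<in>{1..n}. s i j p) = 1)"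

definition intersecting_system ::
  "nat \<Rightarrow> nat \<Rightarrow> (nat \<Rightarrow> nat set) \<Rightarrow> (nat \<Rightarrow> real) \<Rightarrow> (nat \<Rightarrow> nat \<Rightarrow> nat \<Rightarrow> real) \<Rightarrow> bool" where
  "intersecting_system n m F w s \<longleftrightarrow>
     (\<forall>i<m. \<forall>j<m. \<forall>p\<in>{1..n}. s i j p > 0 \<longrightarrow> p \<in> F i \<inter> F j)"

definition balanced_system ::
  "nat \<Rightarrow> nat \<Rightarrow> (nat \<Rightarrow> nat set) \<Rightarrow> (nat \<Rightarrow> real) \<Rightarrow> (nat \<Rightarrow> nat \<Rightarrow> nat \<Rightarrow> real) \<Rightarrow> bool" where
  "balanced_system n m F w s \<longleftrightarrow>
     (\<forall>p\<in>{1..n}. (\<Sum>i<m. \<Sum>j<m. w i * w j * s i j p) = 1 / real n)"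

definition system_cardinality :: "nat \<Rightarrow> (nat \<Rightarrow> nat set) \<Rightarrow> nat" where
  "system_cardinality m F = Max (card ` F ` {..<m})"

definition kmin :: "nat \<Rightarrow> nat" where
  "kmin n = (LEAST k. \<exists>m F w s. is_system n m F w s \<and> intersecting_system n m F w s \<and>
                                 balanced_system n m F w s \<and> system_cardinality m F = k)"

end

theory Submission imports Defs begin

definition mass :: "nat \<Rightarrow> (nat \<Rightarrow> real) \<Rightarrow> (nat \<Rightarrow> nat \<Rightarrow> nat \<Rightarrow> real) \<Rightarrow> nat \<Rightarrow> real" where
  "mass m w s p = (\<Sum>i<m. \<Sum>j<m. w i * w j * s i j p)"

definition gap :: "nat \<Rightarrow> nat \<Rightarrow> (nat \<Rightarrow> real) \<Rightarrow> (nat \<Rightarrow> nat \<Rightarrow> nat \<Rightarrow> real) \<Rightarrow> real" where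
  "gap n m w s = (\<Sum>p\<in>{1..n}. max 0 (mass m w s p - 1 / real n))"

lemma cont_fst_coord: "continuous_on UNIV (\<lambda>x::('a\<Rightarrow>real)\<times>('b\<Rightarrow>real). fst x i)"
  by (rule continuous_on_compose2[OF continuous_on_product_coordinates continuous_on_fst]) (auto intro: continuous_on_id)

lemma cont_snd_coord: "continuous_on UNIV (\<lambda>x::('a\<Rightarrow>real)\<times>('b\<Rightarrow>real). snd x i)"
  by (rule continuous_on_compose2[OF continuous_on_product_coordinates continuous_on_snd]) (auto intro: continuous_on_id)

lemma compact_cube: "compact {x::'a\<Rightarrow>real. \<forall>i. x i \<in> {0..1}}"
proof -
  have "compactin (product_topology (\<lambda>i. euclidean) UNIV) (PiE UNIV (\<lambda>i::'a. {0..1::real}))"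
    by (subst compactin_PiE) auto
  moreover have "PiE UNIV (\<lambda>i::'a. {0..1::real}) = {x. \<forall>i. x i \<in> {0..1}}"
    by (auto simp: PiE_def Pi_def)
  ultimately show ?thesis by (simp add: euclidean_product_topology)
qed

lemma cont_gap: "continuous_on UNIV (\<lambda>x::(nat\<Rightarrow>real)\<times>(nat\<times>nat\<times>nat\<Rightarrow>real).
   gap n m (fst x) (\<lambda>i j p. snd x (i,j,p)))"
  unfolding gap_def mass_def
  by (intro continuous_intros cont_fst_coord cont_snd_coord)

lemma mass_sum:
  assumes "is_system n m F w s"
  shows "(\<Sum>p\<in>{1..n}. mass m w s p) = 1"
proof -
  have "(\<Sum>p\<in>{1..n}. mass m w s p) = (\<Sum>i<m. \<Sum>j<m. w i * w j * (\<Sum>p\<in>{1..n}. s i j p))"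
    unfolding mass_def
  proof -
    have "(\<Sum>p\<in>{1..n}. \<Sum>i<m. \<Sum>j<m. w i * w j * s i j p) = (\<Sum>i<m. \<Sum>p\<in>{1..n}. \<Sum>j<m. w i * w j * s i j p)"
      by (rule sum.swap)
    also have "\<dots> = (\<Sum>i<m. \<Sum>j<m. \<Sum>p\<in>{1..n}. w i * w j * s i j p)"
      by (rule sum.cong[OF refl], rule sum.swap)
    finally show "(\<Sum>p\<in>{1..n}. \<Sum>i<m. \<Sum>j<m. w i * w j * s i j p) = (\<Sum>i<m. \<Sum>j<m. w i * w j * (\<Sum>p\<in>{1..n}. s i j p))"
      by (simp add: sum_distrib_left)
  qed
  also have "\<dots> = (\<Sum>i<m. \<Sum>j<m. w i * w j)"
    using assms unfolding is_system_def by simp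
  also have "\<dots> = (\<Sum>i<m. w i) * (\<Sum>j<m. w j)"
    by (simp add: sum_product)
  also have "\<dots> = 1" using assms unfolding is_system_def by simp
  finally show ?thesis .
qed

lemma gap_zero_false:
  assumes n: "n > 0" and k: "kmin n > 0" and c: "\<forall>i<m. card (F i) \<le> kmin n - 1"
    and sys: "is_system n m F w s" and int: "intersecting_system n m F w s"
    and g: "gap n m w s \<le> 0"
  shows False
proof -
  have nn: "\<forall>p\<in>{1..n}. max 0 (mass m w s p - 1 / real n) \<ge> 0" by simp
  have "\<forall>p\<in>{1..n}. max 0 (mass m w s p - 1 / real n) = 0"
    using g nn unfolding gap_def
    by (metis (no_types, lifting) antisym finite_atLeastAtMost sum_nonneg sum_nonneg_eq_0_iff)
  hence le: "\<forall>p\<in>{1..n}. mass m w s p \<le> 1 / real n" by (metis max.cobounded2 diff_le_0_iff_le)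
  have "(\<Sum>p\<in>{1..n}. 1 / real n - mass m w s p) = 0"
    using mass_sum[OF sys] n by (simp add: sum_subtractf)
  hence "\<forall>p\<in>{1..n}. 1 / real n - mass m w s p = 0"
    using le by (subst sum_nonneg_eq_0_iff[symmetric]) auto
  hence bal: "balanced_system n m F w s" unfolding balanced_system_def mass_def by auto
  have "m \<noteq> 0"
  proof
    assume "m = 0" then show False using sys unfolding is_system_def by simp
  qed
  hence "system_cardinality m F \<le> kmin n - 1"
    unfolding system_cardinality_def using c by (subst Max_le_iff) auto
  moreover have "kmin n \<le> system_cardinality m F"
    unfolding kmin_def by (rule Least_le) (use sys int bal in blast)
  ultimately show False using k by linarith
qed

lemma lemmaA:
  assumes n: "n > 0" and k: "kmin n > 0" and c: "\<forall>i<m. card (F i) \<le> kmin n - 1"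
    and Fs: "\<forall>i<m. F i \<subseteq> {1..n}"
  shows "\<exists>\<delta>>0. \<forall>w s. is_system n m F w s \<and> intersecting_system n m F w s \<longrightarrow> gap n m w s \<ge> \<delta>"
proof -
  define K :: "((nat\<Rightarrow>real)\<times>(nat\<times>nat\<times>nat\<Rightarrow>real)) set" where
    "K = {x. \<forall>i. x i \<in> {0..1}} \<times> {x. \<forall>i. x i \<in> {0..1}}"
  define C :: "((nat\<Rightarrow>real)\<times>(nat\<times>nat\<times>nat\<Rightarrow>real)) set" where
    "C = {x. (\<Sum>i<m. fst x i) = 1 \<and>
       (\<forall>i. \<forall>j. i < m \<and> j < m \<longrightarrow> (\<Sum>p\<in>{1..n}. snd x (i,j,p)) = 1) \<and>
       (\<forall>i. \<forall>j. \<forall>p. i < m \<and> j < m \<and> p \<in> {1..n} \<and> p \<notin> F i \<inter> F j \<longrightarrow> snd x (i,j,p) = 0)}"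
  define G where "G = (\<lambda>x::(nat\<Rightarrow>real)\<times>(nat\<times>nat\<times>nat\<Rightarrow>real). gap n m (fst x) (\<lambda>i j p. snd x (i,j,p)))"
  have "compact K" unfolding K_def by (intro compact_Times compact_cube)
  moreover have "closed C" unfolding C_def
    by (intro closed_Collect_conj closed_Collect_all closed_Collect_imp closed_Collect_eq
        continuous_intros cont_fst_coord cont_snd_coord) auto
  ultimately have cS: "compact (K \<inter> C)" by auto
  have sysx: "is_system n m F (fst x) (\<lambda>i j p. snd x (i,j,p)) \<and>
      intersecting_system n m F (fst x) (\<lambda>i j p. snd x (i,j,p))" if "x \<in> K \<inter> C" for x
  proof
    have xK: "\<forall>i. fst x i \<in> {0..1}" "\<forall>t. snd x t \<in> {0..1}" using that unfolding K_def by (auto simp: mem_Times_iff)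
    have xC: "(\<Sum>i<m. fst x i) = 1"
       "\<And>i j. i < m \<Longrightarrow> j < m \<Longrightarrow> (\<Sum>p\<in>{1..n}. snd x (i,j,p)) = 1"
       "\<And>i j p. i < m \<Longrightarrow> j < m \<Longrightarrow> p \<in> {1..n} \<Longrightarrow> p \<notin> F i \<inter> F j \<Longrightarrow> snd x (i,j,p) = 0"
      using that unfolding C_def by auto
    show "is_system n m F (fst x) (\<lambda>i j p. snd x (i,j,p))"
      unfolding is_system_def using xK xC(1,2) Fs by simp
    show "intersecting_system n m F (fst x) (\<lambda>i j p. snd x (i,j,p))"
      unfolding intersecting_system_def using xC(3) by force
  qed
  have Gpos: "G x > 0" if "x \<in> K \<inter> C" for x
    using gap_zero_false[OF n k c, of "fst x" "\<lambda>i j p. snd x (i,j,p)"] sysx[OF that]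
    unfolding G_def by force
  have "\<exists>\<delta>>0. \<forall>x\<in>K \<inter> C. G x \<ge> \<delta>"
  proof (cases "K \<inter> C = {}")
    case True then show ?thesis by (intro exI[of _ 1]) auto
  next
    case False
    then obtain x0 where "x0 \<in> K \<inter> C" "\<forall>y\<in>K \<inter> C. G x0 \<le> G y"
      using continuous_attains_inf[OF cS False continuous_on_subset[OF cont_gap[of n m]]]
      unfolding G_def by blast
    then show ?thesis using Gpos by blast
  qed
  then obtain \<delta> where d: "\<delta> > 0" "\<forall>x\<in>K \<inter> C. G x \<ge> \<delta>" by blast
  show ?thesis
  proof (intro exI[of _ \<delta>] conjI allI impI d(1))
    fix w s assume ws: "is_system n m F w s \<and> intersecting_system n m F w s"
    define w0 where "w0 = (\<lambda>i. if i < m then w i else 0)"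
    define s0 where "s0 = (\<lambda>(i,j,p). if i < m \<and> j < m \<and> p \<in> {1..n} then s i j p else 0)"
    have ws1: "\<forall>i<m. 0 \<le> w i \<and> w i \<le> 1" "(\<Sum>i<m. w i) = 1"
      "\<forall>i<m. \<forall>j<m. \<forall>p\<in>{1..n}. 0 \<le> s i j p \<and> s i j p \<le> 1"
      "\<forall>i<m. \<forall>j<m. (\<Sum>p\<in>{1..n}. s i j p) = 1"
      "\<forall>i<m. \<forall>j<m. \<forall>p\<in>{1..n}. s i j p > 0 \<longrightarrow> p \<in> F i \<inter> F j"
      using ws unfolding is_system_def intersecting_system_def by blast+
    have "(w0, s0) \<in> K"
      unfolding K_def w0_def s0_def using ws1(1,3) by (auto simp: mem_Times_iff)
    moreover have "(\<Sum>i<m. w0 i) = 1" unfolding w0_def using ws1(2) by simp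
    moreover have "\<forall>i j. i < m \<and> j < m \<longrightarrow> (\<Sum>p\<in>{1..n}. s0 (i,j,p)) = 1"
      unfolding s0_def using ws1(4) by simp
    moreover have "\<forall>i j p. i < m \<and> j < m \<and> p \<in> {1..n} \<and> p \<notin> F i \<inter> F j \<longrightarrow> s0 (i,j,p) = 0"
    proof (intro allI impI)
      fix i j p assume h: "i < m \<and> j < m \<and> p \<in> {1..n} \<and> p \<notin> F i \<inter> F j"
      hence "\<not> s i j p > 0" "0 \<le> s i j p" using ws1(3,5) by blast+
      thus "s0 (i,j,p) = 0" unfolding s0_def using h by simp
    qed
    ultimately have "(w0, s0) \<in> K \<inter> C" unfolding C_def by simp
    hence "G (w0, s0) \<ge> \<delta>" using d by blast
    moreover have "G (w0, s0) = gap n m w s"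
      unfolding G_def gap_def mass_def w0_def s0_def by simp
    ultimately show "gap n m w s \<ge> \<delta>" by simp
  qed
qed



lemma card_fiber_sum:
  assumes "finite A" "finite B" "g ` A \<subseteq> B"
  shows "card A = (\<Sum>y\<in>B. card {x\<in>A. g x = y})"
  using sum.group[OF assms, of "\<lambda>_. 1::nat"] by simp

definition enum :: "nat set set \<Rightarrow> nat \<Rightarrow> nat set" where
  "enum G = (SOME h. bij_betw h {..<card G} G)"

lemma enum_bij: "finite G \<Longrightarrow> bij_betw (enum G) {..<card G} G"
proof -
  assume "finite G"
  then obtain h where "bij_betw h {0..<card G} G" using ex_bij_betw_nat_finite by blast
  hence "bij_betw h {..<card G} G" by (simp add: atLeast0LessThan)
  thus ?thesis unfolding enum_def by (rule someI[of "\<lambda>h. bij_betw h {..<card G} G"])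
qed

lemma sum_over_enum:
  assumes "finite G"
  shows "(\<Sum>i<card G. a (enum G i)) = (\<Sum>A\<in>G. a A)"
  using sum.reindex_bij_betw[OF enum_bij[OF assms], of a] by simp

lemma rf_pos:
  fixes N v :: nat
  assumes "N > 0" "v < N"
  shows "replication_factor ({..<N} \<times> {..<N}) f v \<ge> 1"
proof -
  have a: "(v,v) \<in> incident_edges ({..<N} \<times> {..<N}) v" using assms unfolding incident_edges_def by auto
  have "incident_edges ({..<N} \<times> {..<N}) v \<subseteq> {..<N} \<times> {..<N}"
    unfolding incident_edges_def by auto
  moreover have "finite ({..<N} \<times> {..<N})" by simp
  ultimately have b: "finite (incident_edges ({..<N} \<times> {..<N}) v)" using finite_subset by blast
  have "f ` incident_edges ({..<N} \<times> {..<N}) v \<noteq> {}" using a by blast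
  moreover have "finite (f ` incident_edges ({..<N} \<times> {..<N}) v)" using b by simp
  ultimately show ?thesis unfolding replication_factor_def
    by (simp add: Suc_le_eq card_gt_0_iff)
qed

theorem theorem2:
  fixes n :: nat
  assumes "n > 0"
  shows "\<exists>\<epsilon>::real. \<epsilon> > 0 \<and>
    (\<forall>N::nat. N > 0 \<longrightarrow>
      \<not> (\<exists>f :: nat \<times> nat \<Rightarrow> nat.
            partitioning ({..<N} \<times> {..<N}) {1..n} f \<and>
            (\<forall>v\<in>{..<N}. replication_factor ({..<N} \<times> {..<N}) f v \<le> kmin n - 1) \<and>
            imbalance ({..<N} \<times> {..<N}) {1..n} f \<le> 1 + \<epsilon>))"
proof (cases "kmin n = 0")
  case True
  show ?thesis
  proof (intro exI[of _ 1] conjI allI impI notI)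
    fix N :: nat assume N: "N > 0"
    assume "\<exists>f :: nat \<times> nat \<Rightarrow> nat.
            partitioning ({..<N} \<times> {..<N}) {1..n} f \<and>
            (\<forall>v\<in>{..<N}. replication_factor ({..<N} \<times> {..<N}) f v \<le> kmin n - 1) \<and>
            imbalance ({..<N} \<times> {..<N}) {1..n} f \<le> 1 + 1"
    then obtain f :: "nat \<times> nat \<Rightarrow> nat" where "\<forall>v\<in>{..<N}. replication_factor ({..<N} \<times> {..<N}) f v \<le> kmin n - 1"
      by blast
    hence "replication_factor ({..<N} \<times> {..<N}) f 0 \<le> 0" using N True by simp
    with rf_pos[OF N N, of f] show False by simp
  qed simp
next
  case False
  define k where "k = kmin n"
  have k: "k > 0" using False k_def by simp
  define FF where "FF = {A. A \<subseteq> {1..n} \<and> card A \<le> k - 1}"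
  have finFF: "finite FF" unfolding FF_def by (rule finite_subset[of _ "Pow {1..n}"]) auto
  have "\<forall>G\<in>Pow FF. \<exists>\<delta>>0. \<forall>w s. is_system n (card G) (enum G) w s \<and>
        intersecting_system n (card G) (enum G) w s \<longrightarrow> gap n (card G) w s \<ge> \<delta>"
  proof
    fix G assume "G \<in> Pow FF"
    hence GF: "G \<subseteq> FF" by simp
    hence fG: "finite G" using finFF finite_subset by blast
    have "\<forall>i<card G. enum G i \<in> FF"
      using bij_betwE[OF enum_bij[OF fG]] GF by blast
    thus "\<exists>\<delta>>0. \<forall>w s. is_system n (card G) (enum G) w s \<and>
        intersecting_system n (card G) (enum G) w s \<longrightarrow> gap n (card G) w s \<ge> \<delta>"
      using lemmaA[OF assms False[unfolded neq0_conv], of "card G" "enum G"]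
      unfolding FF_def k_def by blast
  qed
  then obtain d where d: "\<forall>G\<in>Pow FF. d G > 0 \<and> (\<forall>w s. is_system n (card G) (enum G) w s \<and>
        intersecting_system n (card G) (enum G) w s \<longrightarrow> gap n (card G) w s \<ge> d G)"
    by metis
  define \<delta> where "\<delta> = Min (d ` Pow FF)"
  have \<delta>pos: "\<delta> > 0" unfolding \<delta>_def using d finFF by (subst Min_gr_iff) auto
  have \<delta>le: "\<delta> \<le> d G" if "G \<in> Pow FF" for G
    unfolding \<delta>_def using finFF that by (intro Min_le) auto
  show ?thesis
  proof (intro exI[of _ "\<delta>/2"] conjI allI impI notI)
    show "\<delta>/2 > 0" using \<delta>pos by simp
    fix N :: nat assume N: "N > 0"
    assume "\<exists>f :: nat \<times> nat \<Rightarrow> nat.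
            partitioning ({..<N} \<times> {..<N}) {1..n} f \<and>
            (\<forall>v\<in>{..<N}. replication_factor ({..<N} \<times> {..<N}) f v \<le> kmin n - 1) \<and>
            imbalance ({..<N} \<times> {..<N}) {1..n} f \<le> 1 + \<delta>/2"
    then obtain f where fpart: "partitioning ({..<N} \<times> {..<N}) {1..n} f"
      and frf: "\<forall>v\<in>{..<N}. replication_factor ({..<N} \<times> {..<N}) f v \<le> k - 1"
      and fib: "imbalance ({..<N} \<times> {..<N}) {1..n} f \<le> 1 + \<delta>/2"
      unfolding k_def by blast
    define V where "V = {..<N}"
    define E where "E = V \<times> V"
    define t where "t = (\<lambda>v. f ` incident_edges E v)"
    define G where "G = t ` V"
    have finV: "finite V" "finite E" unfolding V_def E_def by auto
    have tF: "t v \<in> FF" if "v \<in> V" for v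
    proof -
      have "incident_edges E v \<subseteq> E" unfolding incident_edges_def by auto
      hence "t v \<subseteq> {1..n}" using fpart unfolding t_def partitioning_def E_def V_def by blast
      moreover have "card (t v) \<le> k - 1" using frf that
        unfolding t_def replication_factor_def E_def V_def by blast
      ultimately show ?thesis unfolding FF_def by simp
    qed
    have GF: "G \<in> Pow FF" unfolding G_def using tF by auto
    have finG: "finite G" unfolding G_def using finV by simp
    define m where "m = card G"
    define h where "h = enum G"
    have hbij: "bij_betw h {..<m} G" unfolding h_def m_def using enum_bij[OF finG] .
    define C where "C = (\<lambda>i. {v\<in>V. t v = h i})"
    define cnt where "cnt = (\<lambda>i. card (C i))"
    define blk where "blk = (\<lambda>i j p. card {e\<in>C i \<times> C j. f e = p})"
    define w where "w = (\<lambda>i. real (cnt i) / real N)"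
    define s where "s = (\<lambda>i j p. real (blk i j p) / (real (cnt i) * real (cnt j)))"
    have cntpos: "cnt i > 0" if "i < m" for i
    proof -
      have "h i \<in> G" using hbij that bij_betwE by blast
      then obtain v where "v \<in> V" "t v = h i" unfolding G_def by auto
      hence "C i \<noteq> {}" unfolding C_def by auto
      moreover have "finite (C i)" unfolding C_def using finV by simp
      ultimately show ?thesis unfolding cnt_def by (simp add: card_gt_0_iff)
    qed
    have sumcnt: "(\<Sum>i<m. cnt i) = N"
    proof -
      have "card V = (\<Sum>A\<in>G. card {v\<in>V. t v = A})"
        by (rule card_fiber_sum) (use finV finG in \<open>auto simp: G_def\<close>)
      also have "\<dots> = (\<Sum>i<m. cnt i)"
        unfolding cnt_def C_def m_def h_def by (rule sum_over_enum[OF finG, symmetric])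
      finally show ?thesis unfolding V_def by simp
    qed
    have sumblk: "(\<Sum>p\<in>{1..n}. blk i j p) = cnt i * cnt j" for i j
    proof -
      have "C i \<times> C j \<subseteq> E" unfolding C_def E_def by auto
      hence "f ` (C i \<times> C j) \<subseteq> {1..n}" using fpart unfolding partitioning_def E_def V_def by auto
      hence "card (C i \<times> C j) = (\<Sum>p\<in>{1..n}. blk i j p)"
        unfolding blk_def by (intro card_fiber_sum) (use finV in \<open>auto simp: C_def\<close>)
      thus ?thesis unfolding cnt_def by (simp add: card_cartesian_product)
    qed
    have blkcount: "(\<Sum>i<m. \<Sum>j<m. blk i j p) = card {e\<in>E. f e = p}" for p
    proof -
      define Ep where "Ep = {e\<in>E. f e = p}"
      have finEp: "finite Ep" unfolding Ep_def using finV by simp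
      have "card Ep = (\<Sum>AB\<in>G \<times> G. card {e\<in>Ep. (t (fst e), t (snd e)) = AB})"
        by (rule card_fiber_sum) (use finEp finG in \<open>auto simp: G_def Ep_def E_def\<close>)
      also have "\<dots> = (\<Sum>A\<in>G. \<Sum>B\<in>G. card {e\<in>Ep. (t (fst e), t (snd e)) = (A,B)})"
        by (subst sum.cartesian_product) (rule sum.cong, auto)
      also have "\<dots> = (\<Sum>i<m. \<Sum>B\<in>G. card {e\<in>Ep. (t (fst e), t (snd e)) = (h i,B)})"
        unfolding m_def h_def by (rule sum_over_enum[OF finG, symmetric])
      also have "\<dots> = (\<Sum>i<m. \<Sum>j<m. card {e\<in>Ep. (t (fst e), t (snd e)) = (h i,h j)})"
        unfolding m_def h_def by (intro sum.cong refl sum_over_enum[OF finG, symmetric])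
      also have "\<dots> = (\<Sum>i<m. \<Sum>j<m. blk i j p)"
      proof (intro sum.cong refl)
        fix i j
        have "{e\<in>Ep. (t (fst e), t (snd e)) = (h i,h j)} = {e\<in>C i \<times> C j. f e = p}"
          unfolding Ep_def C_def E_def by auto
        thus "card {e\<in>Ep. (t (fst e), t (snd e)) = (h i,h j)} = blk i j p" unfolding blk_def by simp
      qed
      finally show ?thesis unfolding Ep_def by simp
    qed
    have sys: "is_system n m h w s"
      unfolding is_system_def
    proof (intro conjI allI impI ballI)
      fix i assume i: "i < m"
      show "h i \<subseteq> {1..n}" using bij_betwE[OF hbij] GF i unfolding FF_def by blast
      have "cnt i \<le> N" unfolding cnt_def C_def V_def
        by (metis (no_types, lifting) card_lessThan card_mono finite_lessThan mem_Collect_eq subsetI)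
      thus "0 \<le> w i" "w i \<le> 1" unfolding w_def using N by auto
    next
      have "real N = (\<Sum>i<m. real (cnt i))" using sumcnt by (metis of_nat_sum)
      thus "(\<Sum>i<m. w i) = 1" unfolding w_def using N
        by (simp add: sum_divide_distrib[symmetric])
    next
      fix i j p assume i: "i < m" and j: "j < m" and p: "p \<in> {1..n}"
      show "0 \<le> s i j p" unfolding s_def by simp
      have "blk i j p \<le> cnt i * cnt j"
        using sumblk[of i j] p by (metis finite_atLeastAtMost member_le_sum zero_le)
      hence "real (blk i j p) \<le> real (cnt i) * real (cnt j)" by (metis of_nat_le_iff of_nat_mult)
      thus "s i j p \<le> 1" unfolding s_def using cntpos[OF i] cntpos[OF j] by simp
    next
      fix i j assume i: "i < m" and j: "j < m"
      have "(\<Sum>p\<in>{1..n}. s i j p) = real (\<Sum>p\<in>{1..n}. blk i j p) / (real (cnt i) * real (cnt j))"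
        unfolding s_def by (simp add: sum_divide_distrib[symmetric])
      moreover have "real (\<Sum>p\<in>{1..n}. blk i j p) = real (cnt i) * real (cnt j)"
        using sumblk[of i j] by simp
      hence "(\<Sum>p\<in>{1..n}. real (blk i j p)) = real (cnt i) * real (cnt j)" by simp
      ultimately show "(\<Sum>p\<in>{1..n}. s i j p) = 1" using cntpos[OF i] cntpos[OF j] by simp
    qed
    have int: "intersecting_system n m h w s"
      unfolding intersecting_system_def
    proof (intro allI impI ballI)
      fix i j p assume "i < m" "j < m" "p \<in> {1..n}" "s i j p > 0"
      hence "blk i j p \<noteq> 0" unfolding s_def by (metis div_0 of_nat_0 order_less_irrefl)
      hence "{e\<in>C i \<times> C j. f e = p} \<noteq> {}" unfolding blk_def by (metis card.empty)
      then obtain u v where uv: "u \<in> C i" "v \<in> C j" "f (u,v) = p" by auto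
      have "(u,v) \<in> incident_edges E u" "(u,v) \<in> incident_edges E v"
        using uv unfolding incident_edges_def E_def C_def by auto
      hence "p \<in> t u" "p \<in> t v" unfolding t_def using uv(3) by (metis imageI)+
      thus "p \<in> h i \<inter> h j" using uv unfolding C_def by auto
    qed
    have "gap n m w s \<ge> d G" using d GF sys int unfolding m_def h_def by blast
    hence g1: "gap n m w s \<ge> \<delta>" using \<delta>le[OF GF] by simp
    have cardE: "card E = N * N" unfolding E_def V_def by (simp add: card_cartesian_product)
    have massp: "mass m w s p = real (card {e\<in>E. f e = p}) / (real N * real N)" for p
    proof -
      have "mass m w s p = (\<Sum>i<m. \<Sum>j<m. real (blk i j p) / (real N * real N))"
        unfolding mass_def
      proof (intro sum.cong refl)
        fix i j assume "i \<in> {..<m}" "j \<in> {..<m}"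
        hence "cnt i > 0" "cnt j > 0" using cntpos by auto
        thus "w i * w j * s i j p = real (blk i j p) / (real N * real N)"
          unfolding w_def s_def by (simp add: field_simps)
      qed
      also have "\<dots> = real (\<Sum>i<m. \<Sum>j<m. blk i j p) / (real N * real N)"
        by (simp add: sum_divide_distrib[symmetric])
      finally show ?thesis using blkcount[of p] by simp
    qed
    have "gap n m w s \<le> (\<Sum>p\<in>{1..n}. (\<delta>/2) / real n)"
      unfolding gap_def
    proof (intro sum_mono)
      fix p assume p: "p \<in> {1..n}"
      define M where "M = Max ((\<lambda>l. card {e\<in>E. f e = l}) ` {1..n})"
      have "card {e\<in>E. f e = p} \<le> M" unfolding M_def using p by (intro Max_ge) auto
      moreover have "real M / (real (N*N) / real n) \<le> 1 + \<delta>/2"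
        using fib unfolding imbalance_def M_def E_def V_def by (simp add: card_cartesian_product)
      ultimately have "real (card {e\<in>E. f e = p}) / (real (N*N) / real n) \<le> 1 + \<delta>/2"
        using N assms by (smt (verit) divide_right_mono of_nat_0_le_iff of_nat_le_iff zero_le_divide_iff)
      hence "real (card {e\<in>E. f e = p}) / (real N * real N) \<le> (1 + \<delta>/2) / real n"
        using N assms by (simp add: field_simps)
      hence "mass m w s p - 1 / real n \<le> (\<delta>/2) / real n"
        using massp[of p] by (simp add: add_divide_distrib)
      thus "max 0 (mass m w s p - 1 / real n) \<le> (\<delta>/2) / real n"
        using \<delta>pos assms by simp
    qed
    also have "\<dots> = \<delta>/2" using assms by simp
    finally show False using g1 \<delta>pos by simp
  qed
qed

end
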